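(* Let $\Gamma$, $\Delta$, $\Sigma$ be finite multisets of formulas not containing $\ast$. If the multi-succedent sequent $\Gamma, \Delta \Rightarrow \Sigma$ is derivable in classical propositional logic (i.e. the conjunction of $\Gamma,\Delta$ classically entails the disjunction of $\Sigma$), then \[ \Pi_V, \Gamma, \lnot_\ast\lnot\Delta, \lnot_\ast\Sigma \vdash_i \ast \] for every set $V$ of propositional variables containing \[ (\mathcal{V}^-(\Gamma,\Delta) \cup \mathcal{V}^+(\Sigma)) \cap (\mathcal{V}^+_{ns}(\Gamma) \cup \mathcal{V}^+(\Delta) \cup \mathcal{V}^-(\Sigma)). \] Here $\lnot_\ast\lnot\Delta$ denotes the multiset $\lnot_\ast\lnot D_1,\ldots,\lnot_\ast\lnot D_n$ if $\Delta = D_1,\ldots,D_n$, and $\lnot_\ast\Sigma$ denotes $\lnot_\ast S_1,\ldots,\lnot_\ast S_m$ if $\Sigma=S_1,\ldots,S_m$.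
   Context: Formulas are built from propositional variables and $\bot$ using $\land$, $\lor$, $\to$; $\lnot A$ abbreviates $A \to \bot$. $\ast$ is a distinguished propositional letter (placeholder), and $\lnot_\ast A$ abbreviates $A \to \ast$. For a set $V$ of propositional variables, $\Pi_V = \{ p \lor \lnot p \mid p \in V\}$. $\vdash_i$ denotes derivability in intuitionistic propositional logic (e.g. in the sequent calculus G3ip). The sets $\mathcal{V}^+(A)$, $\mathcal{V}^-(A)$ of variables occurring positively, negatively in $A$ are defined simultaneously by: $\mathcal{V}^+(p)=\{p\}$, $\mathcal{V}^+(\bot)=\emptyset$, $\mathcal{V}^+(A\land B)=\mathcal{V}^+(A\lor B)=\mathcal{V}^+(A)\cup\mathcal{V}^+(B)$, $\mathcal{V}^+(A\to B)=\mathcal{V}^-(A)\cup\mathcal{V}^+(B)$; $\mathcal{V}^-(p)=\mathcal{V}^-(\bot)=\emptyset$, $\mathcal{V}^-(A\land B)=\mathcal{V}^-(A\lor B)=\mathcal{V}^-(A)\cup\mathcal{V}^-(B)$, $\mathcal{V}^-(A\to B)=\mathcal{V}^+(A)\cup\mathcal{V}^-(B)$. The set $\mathcal{V}^+_{ns}(A)$ of variables occurring non-strictly positively is defined by $\mathcal{V}^+_{ns}(p)=\mathcal{V}^+_{ns}(\bot)=\emptyset$, $\mathcal{V}^+_{ns}(A\land B)=\mathcal{V}^+_{ns}(A\lor B)=\mathcal{V}^+_{ns}(A)\cup\mathcal{V}^+_{ns}(B)$, $\mathcal{V}^+_{ns}(A\to B)=\mathcal{V}^-(A)\cup\mathcal{V}^+_{ns}(B)$.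 For a finite multiset $\Gamma$, $\mathcal{V}^+(\Gamma)=\bigcup_{A\in\Gamma}\mathcal{V}^+(A)$, and similarly for $\mathcal{V}^-$ and $\mathcal{V}^+_{ns}$; $\mathcal{V}^-(\Gamma,\Delta)$ is $\mathcal{V}^-$ of the multiset union. *)

theory Defs
  imports "HOL-Library.Multiset"
begin

datatype 'v form = Var 'v | Bot | And "'v form" "'v form" | Or "'v form" "'v form"
  | Imp "'v form" "'v form"

definition Neg :: "'v form \<Rightarrow> 'v form" where
  "Neg A = Imp A Bot"

text \<open>The placeholder letter is passed explicitly as a variable st.
  negs st A abbreviates A implies st.\<close>
definition negs :: "'v \<Rightarrow> 'v form \<Rightarrow> 'v form" where
  "negs st A = Imp A (Var st)"

fun atoms :: "'v form \<Rightarrow> 'v set" where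
  "atoms (Var p) = {p}"
| "atoms Bot = {}"
| "atoms (And A B) = atoms A \<union> atoms B"
| "atoms (Or A B) = atoms A \<union> atoms B"
| "atoms (Imp A B) = atoms A \<union> atoms B"

definition PiV :: "'v set \<Rightarrow> 'v form set" where
  "PiV V = {Or (Var p) (Neg (Var p)) | p. p \<in> V}"

fun vpos :: "'v form \<Rightarrow> 'v set" and vneg :: "'v form \<Rightarrow> 'v set" where
  "vpos (Var p) = {p}"
| "vpos Bot = {}"
| "vpos (And A B) = vpos A \<union> vpos B"
| "vpos (Or A B) = vpos A \<union> vpos B"
| "vpos (Imp A B) = vneg A \<union> vpos B"
| "vneg (Var p) = {}"
| "vneg Bot = {}"
| "vneg (And A B) = vneg A \<union> vneg B"
| "vneg (Or A B) = vneg A \<union> vneg B"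
| "vneg (Imp A B) = vpos A \<union> vneg B"

fun vns :: "'v form \<Rightarrow> 'v set" where
  "vns (Var p) = {}"
| "vns Bot = {}"
| "vns (And A B) = vns A \<union> vns B"
| "vns (Or A B) = vns A \<union> vns B"
| "vns (Imp A B) = vneg A \<union> vns B"

definition mpos :: "'v form multiset \<Rightarrow> 'v set" where
  "mpos \<Gamma> = (\<Union>A\<in>set_mset \<Gamma>. vpos A)"
definition mneg :: "'v form multiset \<Rightarrow> 'v set" where
  "mneg \<Gamma> = (\<Union>A\<in>set_mset \<Gamma>. vneg A)"
definition mns :: "'v form multiset \<Rightarrow> 'v set" where
  "mns \<Gamma> = (\<Union>A\<in>set_mset \<Gamma>. vns A)"

inductive ideriv :: "'v form set \<Rightarrow> 'v form \<Rightarrow> bool" (infix "\<turnstile>\<^sub>i" 55) where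
  Ass: "A \<in> G \<Longrightarrow> G \<turnstile>\<^sub>i A"
| BotE: "G \<turnstile>\<^sub>i Bot \<Longrightarrow> G \<turnstile>\<^sub>i A"
| AndI: "G \<turnstile>\<^sub>i A \<Longrightarrow> G \<turnstile>\<^sub>i B \<Longrightarrow> G \<turnstile>\<^sub>i And A B"
| AndE1: "G \<turnstile>\<^sub>i And A B \<Longrightarrow> G \<turnstile>\<^sub>i A"
| AndE2: "G \<turnstile>\<^sub>i And A B \<Longrightarrow> G \<turnstile>\<^sub>i B"
| OrI1: "G \<turnstile>\<^sub>i A \<Longrightarrow> G \<turnstile>\<^sub>i Or A B"
| OrI2: "G \<turnstile>\<^sub>i B \<Longrightarrow> G \<turnstile>\<^sub>i Or A B"
| OrE: "G \<turnstile>\<^sub>i Or A B \<Longrightarrow> insert A G \<turnstile>\<^sub>i C \<Longrightarrow> insert B G \<turnstile>\<^sub>i C \<Longrightarrow> G \<turnstile>\<^sub>i C"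
| ImpI: "insert A G \<turnstile>\<^sub>i B \<Longrightarrow> G \<turnstile>\<^sub>i Imp A B"
| ImpE: "G \<turnstile>\<^sub>i Imp A B \<Longrightarrow> G \<turnstile>\<^sub>i A \<Longrightarrow> G \<turnstile>\<^sub>i B"

fun eval :: "('v \<Rightarrow> bool) \<Rightarrow> 'v form \<Rightarrow> bool" where
  "eval I (Var p) = I p"
| "eval I Bot = False"
| "eval I (And A B) = (eval I A \<and> eval I B)"
| "eval I (Or A B) = (eval I A \<or> eval I B)"
| "eval I (Imp A B) = (eval I A \<longrightarrow> eval I B)"

definition cderiv :: "'v form multiset \<Rightarrow> 'v form multiset \<Rightarrow> bool" where
  "cderiv \<Gamma> \<Sigma> \<longleftrightarrow> (\<forall>I. (\<forall>A\<in>#\<Gamma>. eval I A) \<longrightarrow> (\<exists>S\<in>#\<Sigma>. eval I S))"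

end

theory Submission
  imports Defs
begin

lemma weaken: "G \<turnstile>\<^sub>i A \<Longrightarrow> G \<subseteq> H \<Longrightarrow> H \<turnstile>\<^sub>i A"
proof (induction arbitrary: H rule: ideriv.induct)
  case (Ass A G) then show ?case by (auto intro: ideriv.Ass)
next
  case (BotE G A) then show ?case by (auto intro: ideriv.BotE)
next
  case (AndI G A B) then show ?case by (auto intro: ideriv.AndI)
next
  case (AndE1 G A B) then show ?case by (auto intro: ideriv.AndE1)
next
  case (AndE2 G A B) then show ?case by (auto intro: ideriv.AndE2)
next
  case (OrI1 G A B) then show ?case by (auto intro: ideriv.OrI1)
next
  case (OrI2 G B A) then show ?case by (auto intro: ideriv.OrI2)
next
  case (OrE G A B C)
  have "insert A G \<subseteq> insert A H" "insert B G \<subseteq> insert B H" using OrE.prems by auto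
  then show ?case using OrE by (meson ideriv.OrE)
next
  case (ImpI A G B)
  have "insert A G \<subseteq> insert A H" using ImpI.prems by auto
  then show ?case using ImpI by (meson ideriv.ImpI)
next
  case (ImpE G A B) then show ?case by (meson ideriv.ImpE)
qed

lemma cut: "G \<turnstile>\<^sub>i A \<Longrightarrow> insert A G \<turnstile>\<^sub>i C \<Longrightarrow> G \<turnstile>\<^sub>i C"
  by (meson ideriv.ImpE ideriv.ImpI)

lemma ass: "A \<in> G \<Longrightarrow> G \<turnstile>\<^sub>i A" by (rule ideriv.Ass)

lemma ins1: "A \<in> insert A G" by simp
lemma ins2: "A \<in> G \<Longrightarrow> A \<in> insert B G" by simp

lemma wk: "H \<turnstile>\<^sub>i C \<Longrightarrow> H \<subseteq> G \<Longrightarrow> G \<turnstile>\<^sub>i C" by (rule weaken)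

lemma g_bot: "Bot \<in> G \<Longrightarrow> G \<turnstile>\<^sub>i C"
  by (meson ass ideriv.BotE)

lemma g_and: "And A B \<in> G \<Longrightarrow> H \<turnstile>\<^sub>i C \<Longrightarrow> H \<subseteq> insert A (insert B G) \<Longrightarrow> G \<turnstile>\<^sub>i C"
proof -
  assume a: "And A B \<in> G" and h: "H \<turnstile>\<^sub>i C" and s: "H \<subseteq> insert A (insert B G)"
  have 1: "G \<turnstile>\<^sub>i B" using a by (meson ass ideriv.AndE2)
  have 2: "insert B G \<turnstile>\<^sub>i A" using a by (meson ass ideriv.AndE1 ins2)
  have "insert A (insert B G) \<turnstile>\<^sub>i C" using h s wk by blast
  then show ?thesis using 1 2 cut by blast
qed

lemma g_or: "Or A B \<in> G \<Longrightarrow> H1 \<turnstile>\<^sub>i C \<Longrightarrow> H1 \<subseteq> insert A G \<Longrightarrow> H2 \<turnstile>\<^sub>i C \<Longrightarrow> H2 \<subseteq> insert B G \<Longrightarrow> G \<turnstile>\<^sub>i C"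
  by (meson ass ideriv.OrE wk)

lemma g_imp: "Imp A B \<in> G \<Longrightarrow> H1 \<turnstile>\<^sub>i Var s \<Longrightarrow> H1 \<subseteq> insert (negs s A) G
   \<Longrightarrow> H2 \<turnstile>\<^sub>i Var s \<Longrightarrow> H2 \<subseteq> insert B G \<Longrightarrow> G \<turnstile>\<^sub>i Var s"
proof -
  assume a: "Imp A B \<in> G" and h1: "H1 \<turnstile>\<^sub>i Var s" "H1 \<subseteq> insert (negs s A) G"
    and h2: "H2 \<turnstile>\<^sub>i Var s" "H2 \<subseteq> insert B G"
  have "insert A G \<turnstile>\<^sub>i B" using a by (meson ass ideriv.ImpE ins1 ins2)
  moreover have "insert B (insert A G) \<turnstile>\<^sub>i Var s" using h2 by (auto intro: wk)
  ultimately have "insert A G \<turnstile>\<^sub>i Var s" by (rule cut)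
  then have "G \<turnstile>\<^sub>i negs s A" unfolding negs_def by (rule ideriv.ImpI)
  moreover have "insert (negs s A) G \<turnstile>\<^sub>i Var s" using h1 by (auto intro: wk)
  ultimately show ?thesis by (rule cut)
qed

lemma d_bot: "negs s (Neg Bot) \<in> G \<Longrightarrow> G \<turnstile>\<^sub>i Var s"
  unfolding negs_def Neg_def by (meson ass ideriv.ImpE ideriv.ImpI ins1)

lemma d_nnA: "negs s (Neg (And A B)) \<in> G \<Longrightarrow> G \<turnstile>\<^sub>i negs s (Neg A)"
  unfolding negs_def Neg_def
  apply (rule ideriv.ImpI)
  apply (rule ideriv.ImpE[where A="Imp (And A B) Bot"])
   apply (rule ass, simp)
  apply (rule ideriv.ImpI)
  apply (rule ideriv.ImpE[where A=A])
   apply (rule ass, simp)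
  apply (rule ideriv.AndE1[where B=B])
  apply (rule ass, simp)
  done

lemma d_nnB: "negs s (Neg (And A B)) \<in> G \<Longrightarrow> G \<turnstile>\<^sub>i negs s (Neg B)"
  unfolding negs_def Neg_def
  apply (rule ideriv.ImpI)
  apply (rule ideriv.ImpE[where A="Imp (And A B) Bot"])
   apply (rule ass, simp)
  apply (rule ideriv.ImpI)
  apply (rule ideriv.ImpE[where A=B])
   apply (rule ass, simp)
  apply (rule ideriv.AndE2[where A=A])
  apply (rule ass, simp)
  done

lemma d_and: "negs s (Neg (And A B)) \<in> G \<Longrightarrow> H \<turnstile>\<^sub>i C \<Longrightarrow> H \<subseteq> insert (negs s (Neg A)) (insert (negs s (Neg B)) G) \<Longrightarrow> G \<turnstile>\<^sub>i C"
proof -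
  assume a: "negs s (Neg (And A B)) \<in> G" and h: "H \<turnstile>\<^sub>i C" and sb: "H \<subseteq> insert (negs s (Neg A)) (insert (negs s (Neg B)) G)"
  have 1: "G \<turnstile>\<^sub>i negs s (Neg B)" using a by (rule d_nnB)
  have 2: "insert (negs s (Neg B)) G \<turnstile>\<^sub>i negs s (Neg A)" using a by (meson d_nnA ins2)
  have "insert (negs s (Neg A)) (insert (negs s (Neg B)) G) \<turnstile>\<^sub>i C" using h sb wk by blast
  then show ?thesis using 1 2 cut by blast
qed

lemma d_or: "negs s (Neg (Or A B)) \<in> G \<Longrightarrow> H1 \<turnstile>\<^sub>i Var s \<Longrightarrow> H1 \<subseteq> insert (negs s (Neg A)) G
   \<Longrightarrow> H2 \<turnstile>\<^sub>i Var s \<Longrightarrow> H2 \<subseteq> insert (negs s (Neg B)) G \<Longrightarrow> G \<turnstile>\<^sub>i Var s"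
proof -
  assume a: "negs s (Neg (Or A B)) \<in> G" and h1: "H1 \<turnstile>\<^sub>i Var s" "H1 \<subseteq> insert (negs s (Neg A)) G"
    and h2: "H2 \<turnstile>\<^sub>i Var s" "H2 \<subseteq> insert (negs s (Neg B)) G"
  let ?G = "insert (Neg B) (insert (Neg A) G)"
  have "?G \<turnstile>\<^sub>i Neg (Or A B)"
    unfolding Neg_def
    apply (rule ideriv.ImpI)
    apply (rule ideriv.OrE[where A=A and B=B])
      apply (rule ass, simp)
     apply (rule ideriv.ImpE[where A=A]) apply (rule ass, simp add: Neg_def) apply (rule ass, simp)
    apply (rule ideriv.ImpE[where A=B]) apply (rule ass, simp add: Neg_def) apply (rule ass, simp)
    done
  then have "?G \<turnstile>\<^sub>i Var s" using a unfolding negs_def by (meson ass ideriv.ImpE ins2)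
  then have "insert (Neg A) G \<turnstile>\<^sub>i negs s (Neg B)" unfolding negs_def by (rule ideriv.ImpI)
  moreover have "insert (negs s (Neg B)) (insert (Neg A) G) \<turnstile>\<^sub>i Var s" using h2 by (auto intro: wk)
  ultimately have "insert (Neg A) G \<turnstile>\<^sub>i Var s" by (rule cut)
  then have "G \<turnstile>\<^sub>i negs s (Neg A)" unfolding negs_def by (rule ideriv.ImpI)
  moreover have "insert (negs s (Neg A)) G \<turnstile>\<^sub>i Var s" using h1 by (auto intro: wk)
  ultimately show ?thesis by (rule cut)
qed

lemma d_imp: "negs s (Neg (Imp A B)) \<in> G \<Longrightarrow> H1 \<turnstile>\<^sub>i Var s \<Longrightarrow> H1 \<subseteq> insert (negs s A) G
   \<Longrightarrow> H2 \<turnstile>\<^sub>i Var s \<Longrightarrow> H2 \<subseteq> insert (negs s (Neg B)) G \<Longrightarrow> G \<turnstile>\<^sub>i Var s"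
proof -
  assume a: "negs s (Neg (Imp A B)) \<in> G" and h1: "H1 \<turnstile>\<^sub>i Var s" "H1 \<subseteq> insert (negs s A) G"
    and h2: "H2 \<turnstile>\<^sub>i Var s" "H2 \<subseteq> insert (negs s (Neg B)) G"
  let ?G = "insert (Neg B) (insert A G)"
  have "?G \<turnstile>\<^sub>i Neg (Imp A B)"
    unfolding Neg_def
    apply (rule ideriv.ImpI)
    apply (rule ideriv.ImpE[where A=B]) apply (rule ass, simp add: Neg_def)
    apply (rule ideriv.ImpE[where A=A]) apply (rule ass, simp) apply (rule ass, simp)
    done
  then have "?G \<turnstile>\<^sub>i Var s" using a unfolding negs_def by (meson ass ideriv.ImpE ins2)
  then have "insert A G \<turnstile>\<^sub>i negs s (Neg B)" unfolding negs_def by (rule ideriv.ImpI)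
  moreover have "insert (negs s (Neg B)) (insert A G) \<turnstile>\<^sub>i Var s" using h2 by (auto intro: wk)
  ultimately have "insert A G \<turnstile>\<^sub>i Var s" by (rule cut)
  then have "G \<turnstile>\<^sub>i negs s A" unfolding negs_def by (rule ideriv.ImpI)
  moreover have "insert (negs s A) G \<turnstile>\<^sub>i Var s" using h1 by (auto intro: wk)
  ultimately show ?thesis by (rule cut)
qed

lemma s_and: "negs s (And A B) \<in> G \<Longrightarrow> H1 \<turnstile>\<^sub>i Var s \<Longrightarrow> H1 \<subseteq> insert (negs s A) G
   \<Longrightarrow> H2 \<turnstile>\<^sub>i Var s \<Longrightarrow> H2 \<subseteq> insert (negs s B) G \<Longrightarrow> G \<turnstile>\<^sub>i Var s"
proof -
  assume a: "negs s (And A B) \<in> G" and h1: "H1 \<turnstile>\<^sub>i Var s" "H1 \<subseteq> insert (negs s A) G"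
    and h2: "H2 \<turnstile>\<^sub>i Var s" "H2 \<subseteq> insert (negs s B) G"
  have "insert B (insert A G) \<turnstile>\<^sub>i Var s" using a unfolding negs_def
    by (meson ass ideriv.AndI ideriv.ImpE ins1 ins2)
  then have "insert A G \<turnstile>\<^sub>i negs s B" unfolding negs_def by (rule ideriv.ImpI)
  moreover have "insert (negs s B) (insert A G) \<turnstile>\<^sub>i Var s" using h2 by (auto intro: wk)
  ultimately have "insert A G \<turnstile>\<^sub>i Var s" by (rule cut)
  then have "G \<turnstile>\<^sub>i negs s A" unfolding negs_def by (rule ideriv.ImpI)
  moreover have "insert (negs s A) G \<turnstile>\<^sub>i Var s" using h1 by (auto intro: wk)
  ultimately show ?thesis by (rule cut)
qed

lemma s_or: "negs s (Or A B) \<in> G \<Longrightarrow> H \<turnstile>\<^sub>i C \<Longrightarrow> H \<subseteq> insert (negs s A) (insert (negs s B) G) \<Longrightarrow> G \<turnstile>\<^sub>i C"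
proof -
  assume a: "negs s (Or A B) \<in> G" and h: "H \<turnstile>\<^sub>i C" and sb: "H \<subseteq> insert (negs s A) (insert (negs s B) G)"
  have 1: "G \<turnstile>\<^sub>i negs s B" using a unfolding negs_def
    by (meson ass ideriv.ImpE ideriv.ImpI ideriv.OrI2 ins1 ins2)
  have 2: "insert (negs s B) G \<turnstile>\<^sub>i negs s A" using a unfolding negs_def
    by (meson ass ideriv.ImpE ideriv.ImpI ideriv.OrI1 ins1 ins2)
  have "insert (negs s A) (insert (negs s B) G) \<turnstile>\<^sub>i C" using h sb wk by blast
  then show ?thesis using 1 2 cut by blast
qed

lemma s_imp: "negs s (Imp A B) \<in> G \<Longrightarrow> H \<turnstile>\<^sub>i C \<Longrightarrow> H \<subseteq> insert (negs s (Neg A)) (insert (negs s B) G) \<Longrightarrow> G \<turnstile>\<^sub>i C"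
proof -
  assume a: "negs s (Imp A B) \<in> G" and h: "H \<turnstile>\<^sub>i C" and sb: "H \<subseteq> insert (negs s (Neg A)) (insert (negs s B) G)"
  have 1: "G \<turnstile>\<^sub>i negs s B" using a unfolding negs_def
    by (meson ass ideriv.ImpE ideriv.ImpI ins1 ins2)
  have "insert A (insert (Neg A) (insert (negs s B) G)) \<turnstile>\<^sub>i B"
    unfolding Neg_def by (meson ass ideriv.BotE ideriv.ImpE ins1 ins2)
  then have "insert (Neg A) (insert (negs s B) G) \<turnstile>\<^sub>i Imp A B" by (rule ideriv.ImpI)
  then have "insert (Neg A) (insert (negs s B) G) \<turnstile>\<^sub>i Var s" using a unfolding negs_def
    by (meson ass ideriv.ImpE ins2)
  then have 2: "insert (negs s B) G \<turnstile>\<^sub>i negs s (Neg A)" unfolding negs_def by (rule ideriv.ImpI)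
  have "insert (negs s (Neg A)) (insert (negs s B) G) \<turnstile>\<^sub>i C" using h sb wk by blast
  then show ?thesis using 1 2 cut by blast
qed

lemma ax_g: "Var p \<in> G \<Longrightarrow> negs s (Var p) \<in> G \<Longrightarrow> G \<turnstile>\<^sub>i Var s"
  unfolding negs_def by (meson ass ideriv.ImpE)

lemma ax_d: "negs s (Neg (Var p)) \<in> G \<Longrightarrow> negs s (Var p) \<in> G \<Longrightarrow> Or (Var p) (Neg (Var p)) \<in> G
   \<Longrightarrow> G \<turnstile>\<^sub>i Var s"
  unfolding negs_def by (meson ass ideriv.ImpE ideriv.OrE ins1 ins2)

fun fsize :: "'v form \<Rightarrow> nat" where
  "fsize (Var p) = 1"
| "fsize Bot = 1"
| "fsize (And A B) = 1 + fsize A + fsize B"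
| "fsize (Or A B) = 1 + fsize A + fsize B"
| "fsize (Imp A B) = 1 + fsize A + fsize B"

definition msize :: "'v form multiset \<Rightarrow> nat" where
  "msize M = sum_mset (image_mset fsize M)"

lemma msize_add[simp]: "msize (add_mset F M) = fsize F + msize M"
  by (simp add: msize_def)

fun isVar :: "'v form \<Rightarrow> bool" where
  "isVar (Var p) = True" | "isVar _ = False"

definition hyps :: "'v set \<Rightarrow> 'v \<Rightarrow> 'v form multiset \<Rightarrow> 'v form multiset \<Rightarrow> 'v form multiset \<Rightarrow> 'v form set" where
  "hyps V s \<Gamma> \<Delta> \<Sigma> = PiV V \<union> set_mset \<Gamma> \<union> (\<lambda>D. negs s (Neg D)) ` set_mset \<Delta> \<union> negs s ` set_mset \<Sigma>"

definition cond :: "'v set \<Rightarrow> 'v form multiset \<Rightarrow> 'v form multiset \<Rightarrow> 'v form multiset \<Rightarrow> bool" where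
  "cond V \<Gamma> \<Delta> \<Sigma> \<longleftrightarrow> (mneg (\<Gamma> + \<Delta>) \<union> mpos \<Sigma>) \<inter> (mns \<Gamma> \<union> mpos \<Delta> \<union> mneg \<Sigma>) \<subseteq> V"

lemma hyps_simps:
  "hyps V s (add_mset F \<Gamma>) \<Delta> \<Sigma> = insert F (hyps V s \<Gamma> \<Delta> \<Sigma>)"
  "hyps V s \<Gamma> (add_mset F \<Delta>) \<Sigma> = insert (negs s (Neg F)) (hyps V s \<Gamma> \<Delta> \<Sigma>)"
  "hyps V s \<Gamma> \<Delta> (add_mset F \<Sigma>) = insert (negs s F) (hyps V s \<Gamma> \<Delta> \<Sigma>)"
  by (auto simp: hyps_def)

lemma m_simps:
  "mneg (add_mset F M) = vneg F \<union> mneg M" "mpos (add_mset F M) = vpos F \<union> mpos M"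
  "mns (add_mset F M) = vns F \<union> mns M"
  "mneg (M + N) = mneg M \<union> mneg N" "mpos (M + N) = mpos M \<union> mpos N" "mns (M + N) = mns M \<union> mns N"
  by (auto simp: mneg_def mpos_def mns_def)

lemma main:
  assumes "cderiv (\<Gamma> + \<Delta>) \<Sigma>" "cond V \<Gamma> \<Delta> \<Sigma>"
  shows "hyps V s \<Gamma> \<Delta> \<Sigma> \<turnstile>\<^sub>i Var s"
  using assms
proof (induction "msize \<Gamma> + msize \<Delta> + msize \<Sigma>" arbitrary: \<Gamma> \<Delta> \<Sigma> rule: less_induct)
  case less
  note IH = less.hyps
  note P = less.prems
  show ?case
  proof (cases "\<exists>F\<in>#\<Gamma>. \<not> isVar F")
    case True
    then obtain F \<Gamma>0 where G: "\<Gamma> = add_mset F \<Gamma>0" and nv: "\<not> isVar F" by (metis multi_member_split)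
    show ?thesis
    proof (cases F)
      case (Var p) then show ?thesis using nv by simp
    next
      case Bot then show ?thesis by (intro g_bot) (simp add: G hyps_simps)
    next
      case (And A B)
      have h1: "hyps V s (add_mset A (add_mset B \<Gamma>0)) \<Delta> \<Sigma> \<turnstile>\<^sub>i Var s"
        apply (rule IH)
 apply (simp add: G And)
 using P(1) apply (auto simp: G And cderiv_def)[1]
 using P(2) apply (auto simp: G And cond_def m_simps)[1]
 done
      show ?thesis by (rule g_and[OF _ h1]) (auto simp: G And hyps_simps)
    next
      case (Or A B)
      have h1: "hyps V s (add_mset A \<Gamma>0) \<Delta> \<Sigma> \<turnstile>\<^sub>i Var s"
        apply (rule IH)
 apply (simp add: G Or)
 using P(1) apply (auto simp: G Or cderiv_def)[1]
 using P(2) apply (auto simp: G Or cond_def m_simps)[1]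
 done
      have h2: "hyps V s (add_mset B \<Gamma>0) \<Delta> \<Sigma> \<turnstile>\<^sub>i Var s"
        apply (rule IH)
 apply (simp add: G Or)
 using P(1) apply (auto simp: G Or cderiv_def)[1]
 using P(2) apply (auto simp: G Or cond_def m_simps)[1]
 done
      show ?thesis by (rule g_or[OF _ h1 _ h2]) (auto simp: G Or hyps_simps)
    next
      case (Imp A B)
      have h1: "hyps V s \<Gamma>0 \<Delta> (add_mset A \<Sigma>) \<turnstile>\<^sub>i Var s"
        apply (rule IH)
 apply (simp add: G Imp)
 using P(1) apply (auto simp: G Imp cderiv_def)[1]
 using P(2) apply (auto simp: G Imp cond_def m_simps)[1]
 done
      have h2: "hyps V s (add_mset B \<Gamma>0) \<Delta> \<Sigma> \<turnstile>\<^sub>i Var s"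
        apply (rule IH)
 apply (simp add: G Imp)
 using P(1) apply (auto simp: G Imp cderiv_def)[1]
 using P(2) apply (auto simp: G Imp cond_def m_simps)[1]
 done
      show ?thesis by (rule g_imp[OF _ h1 _ h2]) (auto simp: G Imp hyps_simps)
    qed
  next
    case NG: False
    show ?thesis
    proof (cases "\<exists>F\<in>#\<Delta>. \<not> isVar F")
      case True
      then obtain F \<Delta>0 where D: "\<Delta> = add_mset F \<Delta>0" and nv: "\<not> isVar F" by (metis multi_member_split)
      show ?thesis
      proof (cases F)
        case (Var p) then show ?thesis using nv by simp
      next
        case Bot then show ?thesis by (intro d_bot) (simp add: D hyps_simps)
      next
        case (And A B)
        have h1: "hyps V s \<Gamma> (add_mset A (add_mset B \<Delta>0)) \<Sigma> \<turnstile>\<^sub>i Var s"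
          apply (rule IH)
 apply (simp add: D And)
 using P(1) apply (auto simp: D And cderiv_def)[1]
 using P(2) apply (auto simp: D And cond_def m_simps)[1]
 done
        show ?thesis by (rule d_and[OF _ h1]) (auto simp: D And hyps_simps)
      next
        case (Or A B)
        have h1: "hyps V s \<Gamma> (add_mset A \<Delta>0) \<Sigma> \<turnstile>\<^sub>i Var s"
          apply (rule IH)
 apply (simp add: D Or)
 using P(1) apply (auto simp: D Or cderiv_def)[1]
 using P(2) apply (auto simp: D Or cond_def m_simps)[1]
 done
        have h2: "hyps V s \<Gamma> (add_mset B \<Delta>0) \<Sigma> \<turnstile>\<^sub>i Var s"
          apply (rule IH)
 apply (simp add: D Or)
 using P(1) apply (auto simp: D Or cderiv_def)[1]
 using P(2) apply (auto simp: D Or cond_def m_simps)[1]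
 done
        show ?thesis by (rule d_or[OF _ h1 _ h2]) (auto simp: D Or hyps_simps)
      next
        case (Imp A B)
        have h1: "hyps V s \<Gamma> \<Delta>0 (add_mset A \<Sigma>) \<turnstile>\<^sub>i Var s"
          apply (rule IH)
 apply (simp add: D Imp)
 using P(1) apply (auto simp: D Imp cderiv_def)[1]
 using P(2) apply (auto simp: D Imp cond_def m_simps)[1]
 done
        have h2: "hyps V s \<Gamma> (add_mset B \<Delta>0) \<Sigma> \<turnstile>\<^sub>i Var s"
          apply (rule IH)
 apply (simp add: D Imp)
 using P(1) apply (auto simp: D Imp cderiv_def)[1]
 using P(2) apply (auto simp: D Imp cond_def m_simps)[1]
 done
        show ?thesis by (rule d_imp[OF _ h1 _ h2]) (auto simp: D Imp hyps_simps)
      qed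
    next
      case ND: False
      show ?thesis
      proof (cases "\<exists>F\<in>#\<Sigma>. \<not> isVar F")
        case True
        then obtain F \<Sigma>0 where S: "\<Sigma> = add_mset F \<Sigma>0" and nv: "\<not> isVar F" by (metis multi_member_split)
        show ?thesis
        proof (cases F)
          case (Var p) then show ?thesis using nv by simp
        next
          case Bot
          have h1: "hyps V s \<Gamma> \<Delta> \<Sigma>0 \<turnstile>\<^sub>i Var s"
            apply (rule IH)
 apply (simp add: S Bot)
 using P(1) apply (auto simp: S Bot cderiv_def)[1]
 using P(2) apply (auto simp: S Bot cond_def m_simps)[1]
 done
          show ?thesis using h1 by (rule wk) (auto simp: S hyps_simps)
        next
          case (And A B)
          have h1: "hyps V s \<Gamma> \<Delta> (add_mset A \<Sigma>0) \<turnstile>\<^sub>i Var s"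
            apply (rule IH)
 apply (simp add: S And)
 using P(1) apply (auto simp: S And cderiv_def)[1]
 using P(2) apply (auto simp: S And cond_def m_simps)[1]
 done
          have h2: "hyps V s \<Gamma> \<Delta> (add_mset B \<Sigma>0) \<turnstile>\<^sub>i Var s"
            apply (rule IH)
 apply (simp add: S And)
 using P(1) apply (auto simp: S And cderiv_def)[1]
 using P(2) apply (auto simp: S And cond_def m_simps)[1]
 done
          show ?thesis by (rule s_and[OF _ h1 _ h2]) (auto simp: S And hyps_simps)
        next
          case (Or A B)
          have h1: "hyps V s \<Gamma> \<Delta> (add_mset A (add_mset B \<Sigma>0)) \<turnstile>\<^sub>i Var s"
            apply (rule IH)
 apply (simp add: S Or)
 using P(1) apply (auto simp: S Or cderiv_def)[1]
 using P(2) apply (auto simp: S Or cond_def m_simps)[1]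
 done
          show ?thesis by (rule s_or[OF _ h1]) (auto simp: S Or hyps_simps)
        next
          case (Imp A B)
          have h1: "hyps V s \<Gamma> (add_mset A \<Delta>) (add_mset B \<Sigma>0) \<turnstile>\<^sub>i Var s"
            apply (rule IH)
 apply (simp add: S Imp)
 using P(1) apply (auto simp: S Imp cderiv_def)[1]
 using P(2) apply (auto simp: S Imp cond_def m_simps)[1]
 done
          show ?thesis by (rule s_imp[OF _ h1]) (auto simp: S Imp hyps_simps)
        qed
      next
        case NS: False
        define I where "I p = (Var p \<in># \<Gamma> + \<Delta>)" for p
        have allv: "\<forall>F\<in>#\<Gamma>+\<Delta>+\<Sigma>. isVar F" using NG ND NS by auto
        have "\<forall>A\<in>#\<Gamma>+\<Delta>. eval I A"
        proof
          fix A assume "A \<in># \<Gamma>+\<Delta>"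
          moreover then have "isVar A" using allv by auto
          ultimately show "eval I A" by (cases A) (auto simp: I_def)
        qed
        then obtain S where S: "S \<in># \<Sigma>" "eval I S" using P(1) unfolding cderiv_def by blast
        have "isVar S" using allv S(1) by auto
        then obtain p where Sp: "S = Var p" by (cases S) auto
        have sig: "negs s (Var p) \<in> hyps V s \<Gamma> \<Delta> \<Sigma>" using S Sp by (auto simp: hyps_def)
        show ?thesis
        proof (cases "Var p \<in># \<Gamma>")
          case True
          then show ?thesis using sig by (intro ax_g[of p]) (auto simp: hyps_def)
        next
          case False
          then have dp: "Var p \<in># \<Delta>" using S Sp by (auto simp: I_def)
          have "p \<in> V" using P(2) dp S Sp unfolding cond_def
          proof -
            assume c: "(mneg (\<Gamma> + \<Delta>) \<union> mpos \<Sigma>) \<inter> (mns \<Gamma> \<union> mpos \<Delta> \<union> mneg \<Sigma>) \<subseteq> V"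
            have "p \<in> mpos \<Sigma>" using S Sp unfolding mpos_def by force
            moreover have "p \<in> mpos \<Delta>" using dp unfolding mpos_def by force
            ultimately show ?thesis using c by blast
          qed
          then have "Or (Var p) (Neg (Var p)) \<in> hyps V s \<Gamma> \<Delta> \<Sigma>" by (auto simp: hyps_def PiV_def)
          then show ?thesis using sig dp by (intro ax_d[of s p]) (auto simp: hyps_def)
        qed
      qed
    qed
  qed
qed

theorem proposition3:
  fixes st :: 'v and \<Gamma> \<Delta> \<Sigma> :: "'v form multiset" and V :: "'v set"
  assumes "\<forall>A\<in>#\<Gamma> + \<Delta> + \<Sigma>. st \<notin> atoms A"
    and "cderiv (\<Gamma> + \<Delta>) \<Sigma>"
    and "(mneg (\<Gamma> + \<Delta>) \<union> mpos \<Sigma>) \<inter> (mns \<Gamma> \<union> mpos \<Delta> \<union> mneg \<Sigma>) \<subseteq> V"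
  shows "(PiV V \<union> set_mset \<Gamma> \<union> (\<lambda>D. negs st (Neg D)) ` set_mset \<Delta>
           \<union> negs st ` set_mset \<Sigma>) \<turnstile>\<^sub>i Var st"
  using main[of \<Gamma> \<Delta> \<Sigma> V st] assms(2,3) by (simp add: hyps_def cond_def)

end
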